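(* For every $\varepsilon>0$, the set $K_{2.33529\dots+\varepsilon}$ is uncountable, where $2.33529\dots$ is the unique real root of $x^5-x^4-2x^3-2x^2-x-1$ and $K_\alpha$ denotes the set of all closed permutation classes $X$ for which there exists $n_0$ such that $|X\cap S_n|<\alpha^n$ for all $n>n_0$.
   Context: $S_n$ is the set of permutations of $[n]$, $S=\bigcup_n S_n$; $\pi\prec\rho$ means $\rho$ (as a sequence) has a subsequence order-isomorphic to $\pi$; a closed permutation class is a set $X\subset S$ such that $\pi\prec\sigma\in X$ implies $\pi\in X$. *)

theory Defs
  imports Complex_Main "HOL-Library.Countable_Set"
begin

definition perms :: "nat \<Rightarrow> nat list set" where
  "perms n = {xs. distinct xs \<and> set xs = {1..n}}"

definition allPerms :: "nat list set" where
  "allPerms = (\<Union>n. perms n)"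

definition order_iso :: "nat list \<Rightarrow> nat list \<Rightarrow> bool" where
  "order_iso xs ys \<longleftrightarrow> length xs = length ys \<and>
     (\<forall>i<length xs. \<forall>j<length xs. (xs ! i < xs ! j) \<longleftrightarrow> (ys ! i < ys ! j))"

definition pattern_le :: "nat list \<Rightarrow> nat list \<Rightarrow> bool" where
  "pattern_le \<pi> \<rho> \<longleftrightarrow> (\<exists>I \<subseteq> {..<length \<rho>}. order_iso (nths \<rho> I) \<pi>)"

definition closed_class :: "nat list set \<Rightarrow> bool" where
  "closed_class X \<longleftrightarrow> X \<subseteq> allPerms \<and>
     (\<forall>\<sigma>\<in>X. \<forall>\<pi>\<in>allPerms. pattern_le \<pi> \<sigma> \<longrightarrow> \<pi> \<in> X)"

definition K :: "real \<Rightarrow> nat list set set" where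
  "K \<alpha> = {X. closed_class X \<and>
     (\<exists>n0. \<forall>n>n0. real (card (X \<inter> perms n)) < \<alpha> ^ n)}"

definition root_const :: real where
  "root_const = (THE x::real. x^5 - x^4 - 2*x^3 - 2*x^2 - x - 1 = 0)"

end

theory Submission
  imports Defs
begin


definition rh :: "nat \<Rightarrow> nat \<Rightarrow> int" where
 "rh m q = (if q = 0 then 1 else if q \<le> 2 then 0 else if q \<le> 2*m+1 then (if odd q then int q else int q - 2)
            else if q = 2*m+2 then 2*int m+1 else 2*int m)"

definition av :: "nat \<Rightarrow> nat \<Rightarrow> nat" where
 "av m q = (if q = 0 then 4 else if q = 1 then 1 else if q = 2 then 2 else if q \<le> 2*m+1 then
            (if q = 2*m+1 then 2*m+3 else if odd q then q+3 else q-1)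
            else if q = 2*m+2 then 2*m+4 else 2*m+1)"

lemma reg_cases:
  assumes "q < 2*m+4" "m \<ge> 2"
  shows "(q = 0 \<and> rh m q = 1 \<and> av m q = 4) \<or> (q = 1 \<and> rh m q = 0 \<and> av m q = 1) \<or>
         (q = 2 \<and> rh m q = 0 \<and> av m q = 2) \<or>
         (\<exists>j. q = 2*j+3 \<and> q < 2*m+1 \<and> rh m q = 2*int j+3 \<and> av m q = 2*j+6) \<or>
         (\<exists>j. q = 2*j+4 \<and> q \<le> 2*m \<and> rh m q = 2*int j+2 \<and> av m q = 2*j+3) \<or>
         (q = 2*m+1 \<and> rh m q = 2*int m+1 \<and> av m q = 2*m+3) \<or>
         (q = 2*m+2 \<and> rh m q = 2*int m+1 \<and> av m q = 2*m+4) \<or>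
         (q = 2*m+3 \<and> rh m q = 2*int m \<and> av m q = 2*m+1)"
proof -
  consider "q \<le> 2" | "3 \<le> q" "q < 2*m+1" "odd q" | "3 \<le> q" "q < 2*m+1" "even q" | "q \<ge> 2*m+1"
    by linarith
  thus ?thesis
  proof cases
    case 1 thus ?thesis unfolding rh_def av_def using assms by (cases q; cases "q-1") auto
  next
    case 2
    have "q = 2*((q-3) div 2)+3" using 2 by presburger
    then obtain j where j: "q = 2*j+3" by blast
    show ?thesis using 2 j unfolding rh_def av_def by auto
  next
    case 3
    have "q = 2*((q-4) div 2)+4" using 3 by presburger
    then obtain j where j: "q = 2*j+4" by blast
    show ?thesis using 3 j unfolding rh_def av_def by auto
  next
    case 4
    hence "q = 2*m+1 \<or> q = 2*m+2 \<or> q = 2*m+3" using assms by linarith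
    thus ?thesis unfolding rh_def av_def using assms by auto
  qed
qed


lemma av_inv:
  assumes m: "m \<ge> 2" and qq: "q < q'" "q' < 2*m+4"
  shows "av m q > av m q' \<longleftrightarrow> \<bar>rh m q - rh m q'\<bar> = 1"
proof -
  note A = reg_cases[of q m] reg_cases[of q' m]
  have a: "q < 2*m+4" using qq by simp
  show ?thesis
  using A(1)[OF a m] A(2)[OF qq(2) m] qq m
  apply -
  apply (elim disjE exE conjE)
  apply (auto simp: abs_if)
  apply arith+
  done
qed


lemma reg_cases':
  assumes "q < 2*m+4" "m \<ge> 2"
  obtains "q = 0" "rh m q = 1" "av m q = 4" | "q = 1" "rh m q = 0" "av m q = 1" |
         "q = 2" "rh m q = 0" "av m q = 2" |
         j where "q = 2*j+3" "q < 2*m+1" "rh m q = 2*int j+3" "av m q = 2*j+6" |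
         j where "q = 2*j+4" "q \<le> 2*m" "rh m q = 2*int j+2" "av m q = 2*j+3" |
         "q = 2*m+1" "rh m q = 2*int m+1" "av m q = 2*m+3" |
         "q = 2*m+2" "rh m q = 2*int m+1" "av m q = 2*m+4" |
         "q = 2*m+3" "rh m q = 2*int m" "av m q = 2*m+1"
  using reg_cases[OF assms] by blast

lemma av_surj:
  assumes m: "m \<ge> 2" and v: "v \<in> {1..2*m+4}"
  shows "v \<in> av m ` {0..<2*m+4}"
proof -
  have "\<exists>q<2*m+4. av m q = v"
  proof -
    consider "v = 1" | "v = 2" | "v = 4" | "v = 2*m+1" | "v = 2*m+3" | "v = 2*m+4"
      | "odd v" "3 \<le> v" "v \<le> 2*m-1" | "even v" "6 \<le> v" "v \<le> 2*m+2"
    proof -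
      have "v = 1 \<or> v = 2 \<or> v = 4 \<or> v = 2*m+1 \<or> v = 2*m+3 \<or> v = 2*m+4 \<or> (odd v \<and> 3 \<le> v \<and> v \<le> 2*m-1) \<or> (even v \<and> 6 \<le> v \<and> v \<le> 2*m+2)"
        using v m by simp presburger
      thus ?thesis using that by blast
    qed
    thus ?thesis
    proof cases
      case 1 thus ?thesis by (intro exI[of _ 1]) (simp add: av_def)
    next
      case 2 thus ?thesis by (intro exI[of _ 2]) (simp add: av_def)
    next
      case 3 thus ?thesis by (intro exI[of _ 0]) (simp add: av_def)
    next
      case 4 thus ?thesis using m by (intro exI[of _ "2*m+3"]) (simp add: av_def)
    next
      case 5 thus ?thesis using m by (intro exI[of _ "2*m+1"]) (simp add: av_def)
    next
      case 6 thus ?thesis using m by (intro exI[of _ "2*m+2"]) (simp add: av_def)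
    next
      case 7 thus ?thesis using m by (intro exI[of _ "v+1"]) (auto simp add: av_def)
    next
      case 8 thus ?thesis using m by (intro exI[of _ "v-3"]) (auto simp add: av_def)
    qed
  qed
  thus ?thesis by force
qed

definition osc :: "nat \<Rightarrow> nat list" where "osc m = map (av m) [0..<2*m+4]"

lemma osc_len[simp]: "length (osc m) = 2*m+4" by (simp add: osc_def)
lemma osc_nth[simp]: "q < 2*m+4 \<Longrightarrow> osc m ! q = av m q" by (simp add: osc_def)

lemma osc_perm: assumes m: "m \<ge> 2" shows "osc m \<in> perms (2*m+4)"
proof -
  have sub: "av m ` {0..<2*m+4} \<subseteq> {1..2*m+4}"
  proof
    fix x assume "x \<in> av m ` {0..<2*m+4}"
    then obtain q where q: "q < 2*m+4" "x = av m q" by auto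
    show "x \<in> {1..2*m+4}" using q m by (cases rule: reg_cases'[OF q(1) m]) auto
  qed
  have eq: "av m ` {0..<2*m+4} = {1..2*m+4}" using sub av_surj[OF m] by blast
  have "card (av m ` {0..<2*m+4}) = card {0..<2*m+4}" using eq by simp
  hence inj: "inj_on (av m) {0..<2*m+4}" by (intro eq_card_imp_inj_on) auto
  thus ?thesis using eq unfolding perms_def osc_def by (simp add: distinct_map)
qed

lemma rh_twin:
  assumes "q < q'" "q' < 2*m+4" "rh m q = rh m q'" and m: "m \<ge> 2"
  shows "(q = 1 \<and> q' = 2) \<or> (q = 2*m+1 \<and> q' = 2*m+2)"
proof -
  have a: "q < 2*m+4" using assms by simp
  show ?thesis
    apply (cases rule: reg_cases'[OF a m]; cases rule: reg_cases'[OF assms(2) m])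
    using assms apply (auto)
    apply arith+
    done
qed

lemma rh_bounds: "q < 2*m+4 \<Longrightarrow> m \<ge> 2 \<Longrightarrow> 0 \<le> rh m q \<and> rh m q \<le> 2*int m+1 \<and> \<bar>rh m q - int q\<bar> \<le> 3"
  by (cases rule: reg_cases') auto

lemma rh_one: "q < 2*m+4 \<Longrightarrow> m \<ge> 2 \<Longrightarrow> rh m q = 1 \<Longrightarrow> q = 0"
  by (cases rule: reg_cases') auto

lemma rh_top: "q < 2*m+4 \<Longrightarrow> m \<ge> 2 \<Longrightarrow> rh m q = 2*int m \<Longrightarrow> q = 2*m+3"
  by (cases rule: reg_cases') (auto, arith)

lemma rh_plain: "3 \<le> q \<Longrightarrow> q \<le> 2*m+1 \<Longrightarrow> rh m q = (if odd q then int q else int q - 2)"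
  unfolding rh_def by auto

lemma rh_surj:
  assumes "m \<ge> 2" "1 \<le> v" "v \<le> 2*m"
  shows "\<exists>q < 2*m+4. rh m q = int v"
proof (cases "v = 1")
  case True thus ?thesis by (intro exI[of _ 0]) (simp add: rh_def)
next
  case F1: False
  show ?thesis
  proof (cases "v = 2*m")
    case True thus ?thesis using assms by (intro exI[of _ "2*m+3"]) (simp add: rh_def)
  next
    case False
    show ?thesis
    proof (cases "odd v")
      case True
      hence "v \<ge> 3" using F1 assms by presburger
      thus ?thesis using assms True False by (intro exI[of _ v]) (simp add: rh_def)
    next
      case ev: False
      hence "v \<ge> 2" "v + 2 \<le> 2*m" using assms F1 False by presburger+
      thus ?thesis using ev by (intro exI[of _ "v+2"]) (simp add: rh_def)
    qed
  qed
qed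


lemma nths_pos: "nths xs I = map ((!) xs) (filter (\<lambda>i. i \<in> I) [0..<length xs])"
proof -
  have z: "zip xs [0..<length xs] = map (\<lambda>i. (xs!i, i)) [0..<length xs]"
    by (rule nth_equalityI) auto
  show ?thesis unfolding nths_def z by (simp add: filter_map comp_def)
qed

lemma order_iso_refl: "order_iso xs xs" by (simp add: order_iso_def)
lemma order_iso_sym: "order_iso xs ys \<Longrightarrow> order_iso ys xs" by (simp add: order_iso_def)
lemma order_iso_trans: "order_iso xs ys \<Longrightarrow> order_iso ys zs \<Longrightarrow> order_iso xs zs"
  by (simp add: order_iso_def)

lemma order_iso_map:
  assumes "order_iso xs ys" "\<forall>i\<in>set P. i < length xs"
  shows "order_iso (map ((!) xs) P) (map ((!) ys) P)"
  using assms unfolding order_iso_def by auto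

lemma order_iso_nths:
  assumes "order_iso xs ys"
  shows "order_iso (nths xs J) (nths ys J)"
proof -
  have l: "length xs = length ys" using assms by (simp add: order_iso_def)
  show ?thesis unfolding nths_pos l[symmetric]
    by (rule order_iso_map[OF assms]) auto
qed

lemma pattern_le_len: "pattern_le p r \<Longrightarrow> length p \<le> length r"
proof -
  assume "pattern_le p r"
  then obtain I where "order_iso (nths r I) p" unfolding pattern_le_def by auto
  hence "length p = card {i. i < length r \<and> i \<in> I}" by (simp add: order_iso_def length_nths)
  also have "\<dots> \<le> card {..<length r}" by (rule card_mono) auto
  finally show ?thesis by simp
qed

lemma pattern_le_trans:
  assumes "pattern_le p s" "pattern_le s r"
  shows "pattern_le p r"
proof -
  obtain I where I: "I \<subseteq> {..<length r}" "order_iso (nths r I) s" using assms(2) pattern_le_def by auto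
  obtain J where J: "J \<subseteq> {..<length s}" "order_iso (nths s J) p" using assms(1) pattern_le_def by auto
  have "order_iso (nths (nths r I) J) (nths s J)" by (rule order_iso_nths[OF I(2)])
  hence o: "order_iso (nths (nths r I) J) p" using J(2) order_iso_trans by blast
  define I' where "I' = {i \<in> I. \<exists>j \<in> J. card {i' \<in> I. i' < i} = j}"
  have "I' \<subseteq> {..<length r}" using I(1) unfolding I'_def by auto
  moreover have "nths (nths r I) J = nths r I'" unfolding I'_def by (rule nths_nths)
  ultimately show ?thesis using o unfolding pattern_le_def by auto
qed

lemma pattern_le_refl: "pattern_le p p"
  unfolding pattern_le_def
  by (rule exI[of _ "{..<length p}"]) (simp add: order_iso_refl)

lemma perm_rank:
  assumes "xs \<in> perms n" "i < n"
  shows "xs ! i = card {j. j < n \<and> xs ! j \<le> xs ! i}"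
proof -
  have d: "distinct xs" and s: "set xs = {1..n}" using assms(1) by (auto simp: perms_def)
  have len: "length xs = n" using d s distinct_card by fastforce
  have "bij_betw ((!) xs) {j. j < n \<and> xs ! j \<le> xs ! i} {1..xs!i}"
  proof (rule bij_betwI')
    fix x y assume "x \<in> {j. j < n \<and> xs ! j \<le> xs ! i}" "y \<in> {j. j < n \<and> xs ! j \<le> xs ! i}"
    thus "(xs ! x = xs ! y) = (x = y)" using d len nth_eq_iff_index_eq by auto
  next
    fix x assume "x \<in> {j. j < n \<and> xs ! j \<le> xs ! i}"
    hence "xs ! x \<in> set xs" "xs!x \<le> xs!i" using len by auto
    thus "xs ! x \<in> {1..xs ! i}" using s by auto
  next
    fix y assume y: "y \<in> {1..xs ! i}"
    have "xs ! i \<in> set xs" using len assms by auto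
    hence "y \<in> set xs" using y s by auto
    then obtain x where "x < n" "xs ! x = y" using len by (auto simp: in_set_conv_nth)
    thus "\<exists>x\<in>{j. j < n \<and> xs ! j \<le> xs ! i}. y = xs ! x" using y by auto
  qed
  thus ?thesis by (simp add: bij_betw_same_card)
qed

lemma perms_len: "xs \<in> perms n \<Longrightarrow> length xs = n"
  unfolding perms_def using distinct_card by fastforce

lemma order_iso_perms_eq:
  assumes "xs \<in> perms n" "ys \<in> perms n" "order_iso xs ys"
  shows "xs = ys"
proof (rule nth_equalityI)
  show "length xs = length ys" using assms by (simp add: perms_len)
  fix i assume "i < length xs"
  hence i: "i < n" using perms_len[OF assms(1)] by simp
  have "\<forall>j<n. (xs!j \<le> xs!i) = (ys!j \<le> ys!i)"
    using assms(3) perms_len[OF assms(1)] i unfolding order_iso_def by (auto simp: not_less[symmetric])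
  hence "{j. j < n \<and> xs ! j \<le> xs ! i} = {j. j < n \<and> ys ! j \<le> ys ! i}" by auto
  thus "xs ! i = ys ! i" using perm_rank[OF assms(1) i] perm_rank[OF assms(2) i] by simp
qed

lemma order_iso_from_inv:
  assumes "distinct xs" "distinct ys" "length xs = length ys"
    "\<And>s t. s < t \<Longrightarrow> t < length xs \<Longrightarrow> (xs!s > xs!t \<longleftrightarrow> ys!s > ys!t)"
  shows "order_iso xs ys"
  unfolding order_iso_def
proof (intro conjI allI impI)
  show "length xs = length ys" by fact
  fix i j assume ij: "i < length xs" "j < length xs"
  consider "i < j" | "i = j" | "j < i" by linarith
  thus "(xs ! i < xs ! j) = (ys ! i < ys ! j)"
  proof cases
    case 1
    have "xs!i \<noteq> xs!j" "ys!i \<noteq> ys!j" using assms(1,2,3) ij 1 by (auto simp: nth_eq_iff_index_eq)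
    thus ?thesis using assms(4)[OF 1 ij(2)] by auto
  next
    case 2 thus ?thesis by simp
  next
    case 3 thus ?thesis using assms(4)[OF 3 ij(1)] by auto
  qed
qed

lemma uncountable_nat_sets: "uncountable (UNIV :: nat set set)"
proof
  assume "countable (UNIV :: nat set set)"
  then obtain f :: "nat set \<Rightarrow> nat" where "inj f" by (auto simp: countable_def)
  hence "inv f ` UNIV = (UNIV :: nat set set)" by (simp add: inj_imp_surj_inv)
  hence "(\<lambda>n. inv f n) ` (UNIV :: nat set) = Pow UNIV" by simp
  thus False using Cantors_theorem by blast
qed


lemma embed:
  assumes "pattern_le p r"
  obtains ps where "sorted_wrt (<) ps" "\<forall>x\<in>set ps. x < length r" "length ps = length p"
    "order_iso (map ((!) r) ps) p"
proof -
  obtain I where I: "I \<subseteq> {..<length r}" "order_iso (nths r I) p" using assms pattern_le_def by auto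
  define ps where "ps = filter (\<lambda>i. i \<in> I) [0..<length r]"
  have "sorted_wrt (<) ps" unfolding ps_def by (rule sorted_wrt_filter) (simp add: sorted_wrt_upt)
  moreover have "\<forall>x\<in>set ps. x < length r" unfolding ps_def by auto
  moreover have "order_iso (map ((!) r) ps) p" using I(2) unfolding nths_pos ps_def by simp
  moreover hence "length ps = length p" by (simp add: order_iso_def)
  ultimately show ?thesis using that by blast
qed

lemma deg3:
  assumes m: "m \<ge> 2" and x: "x < 2*m+4" and y: "y1 < 2*m+4" "y2 < 2*m+4" "y3 < 2*m+4"
    and d: "y1 \<noteq> y2" "y1 \<noteq> y3" "y2 \<noteq> y3"
    and e: "\<bar>rh m x - rh m y1\<bar> = 1" "\<bar>rh m x - rh m y2\<bar> = 1" "\<bar>rh m x - rh m y3\<bar> = 1"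
  shows "x = 0 \<or> x = 2*m+3"
proof -
  have twin: "rh m a = 0 \<or> rh m a = 2*int m+1" if "a < 2*m+4" "b < 2*m+4" "a \<noteq> b" "rh m a = rh m b" for a b
  proof (cases "a < b")
    case True thus ?thesis using rh_twin[OF True that(2) that(4) m] rh_def by auto
  next
    case False hence ba: "b < a" using that by simp
    show ?thesis using rh_twin[OF ba that(1) that(4)[symmetric] m] rh_def that(4) by auto
  qed
  have "\<exists>a b. a < 2*m+4 \<and> b < 2*m+4 \<and> a \<noteq> b \<and> rh m a = rh m b \<and> \<bar>rh m x - rh m a\<bar> = 1"
  proof -
    have "rh m y1 = rh m y2 \<or> rh m y1 = rh m y3 \<or> rh m y2 = rh m y3" using e by arith
    thus ?thesis using y d e by blast
  qed
  then obtain a where a: "a < 2*m+4" "rh m a = 0 \<or> rh m a = 2*int m+1" "\<bar>rh m x - rh m a\<bar> = 1"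
    using twin by blast
  have bx: "0 \<le> rh m x" "rh m x \<le> 2*int m+1" using rh_bounds[OF x m] by auto
  have "rh m x = 1 \<or> rh m x = 2*int m" using a(2,3) bx by arith
  thus ?thesis using rh_one[OF x m] rh_top[OF x m] by auto
qed

lemma antichain:
  assumes m1: "m1 \<ge> 2" and lt: "m1 < m2"
  shows "\<not> pattern_le (osc m1) (osc m2)"
proof
  assume "pattern_le (osc m1) (osc m2)"
  then obtain ps where ps: "sorted_wrt (<) ps" "\<forall>x\<in>set ps. x < 2*m2+4" "length ps = 2*m1+4"
    "order_iso (map ((!) (osc m2)) ps) (osc m1)" by (rule embed) auto
  have m2: "m2 \<ge> 2" using m1 lt by simp
  define f where "f = (!) ps"
  have fin: "f s < 2*m2+4" if "s < 2*m1+4" for s using ps(2,3) that unfolding f_def by auto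
  have mono: "f s < f t" if "s < t" "t < 2*m1+4" for s t
    using sorted_wrt_nth_less[OF ps(1) that(1)] that ps(3) unfolding f_def by auto
  have all: "\<forall>i<2*m1+4. \<forall>j<2*m1+4. (osc m2 ! (ps!i) < osc m2 ! (ps!j)) = (av m1 i < av m1 j)"
    using ps(4) ps(3) unfolding order_iso_def by auto
  have inv: "(av m2 (f t) < av m2 (f s)) = (av m1 t < av m1 s)" if "s < 2*m1+4" "t < 2*m1+4" for s t
  proof -
    have "(osc m2 ! (ps!t) < osc m2 ! (ps!s)) = (av m1 t < av m1 s)" using all that by blast
    thus ?thesis using fin[OF that(1)] fin[OF that(2)] unfolding f_def by simp
  qed
  have edge1: "(\<bar>rh m1 s - rh m1 t\<bar> = 1) = (\<bar>rh m2 (f s) - rh m2 (f t)\<bar> = 1)"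
    if "s < t" "t < 2*m1+4" for s t
  proof -
    have "(\<bar>rh m1 s - rh m1 t\<bar> = 1) = (av m1 t < av m1 s)" using av_inv[OF m1 that] by simp
    also have "\<dots> = (av m2 (f t) < av m2 (f s))" using inv that by simp
    also have "\<dots> = (\<bar>rh m2 (f s) - rh m2 (f t)\<bar> = 1)" using av_inv[OF m2 mono[OF that] fin[OF that(2)]] by simp
    finally show ?thesis .
  qed
  have edge: "(\<bar>rh m1 s - rh m1 t\<bar> = 1) = (\<bar>rh m2 (f s) - rh m2 (f t)\<bar> = 1)"
    if "s \<noteq> t" "s < 2*m1+4" "t < 2*m1+4" for s t
  proof (cases "s < t")
    case True thus ?thesis using edge1 that by auto
  next
    case False hence "t < s" using that by simp
    thus ?thesis using edge1[of t s] that by (simp add: abs_minus_commute)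
  qed
  have r1: "rh m1 0 = 1" "rh m1 1 = 0" "rh m1 2 = 0" "rh m1 4 = 2" using m1 by (auto simp: rh_def)
  have m12: "f 0 < f 1" "f 1 < f 2" "f 2 < f 4" using mono[of 0 1] mono[of 1 2] mono[of 2 4] m1 by auto
  have f0: "f 0 = 0"
  proof -
    have e: "\<bar>rh m2 (f 0) - rh m2 (f 1)\<bar> = 1" "\<bar>rh m2 (f 0) - rh m2 (f 2)\<bar> = 1" "\<bar>rh m2 (f 0) - rh m2 (f 4)\<bar> = 1"
      using edge[of 0 1] edge[of 0 2] edge[of 0 4] r1 m1 by auto
    have "f 0 = 0 \<or> f 0 = 2*m2+3"
      by (rule deg3[OF m2 fin fin fin fin _ _ _ e]) (use m1 m12 in auto)
    moreover have "f 1 < 2*m2+4" using fin[of 1] m1 by auto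
    ultimately show ?thesis using m12 by auto
  qed
  have r2: "rh m1 (2*m1+3) = 2*int m1" "rh m1 (2*m1+1) = 2*int m1+1" "rh m1 (2*m1+2) = 2*int m1+1"
    "rh m1 (2*m1-1) = 2*int m1-1" using m1 by (auto simp: rh_def)
  have m34: "f (2*m1-1) < f (2*m1+1)" "f (2*m1+1) < f (2*m1+2)" "f (2*m1+2) < f (2*m1+3)" "f 0 < f (2*m1+3)"
    using mono[of "2*m1-1" "2*m1+1"] mono[of "2*m1+1" "2*m1+2"] mono[of "2*m1+2" "2*m1+3"] mono[of 0 "2*m1+3"] m1 by auto
  have fN: "f (2*m1+3) = 2*m2+3"
  proof -
    have e: "\<bar>rh m2 (f (2*m1+3)) - rh m2 (f (2*m1-1))\<bar> = 1" "\<bar>rh m2 (f (2*m1+3)) - rh m2 (f (2*m1+1))\<bar> = 1"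
       "\<bar>rh m2 (f (2*m1+3)) - rh m2 (f (2*m1+2))\<bar> = 1"
      using edge[of "2*m1+3" "2*m1-1"] edge[of "2*m1+3" "2*m1+1"] edge[of "2*m1+3" "2*m1+2"] r2 m1 by auto
    have "f (2*m1+3) = 0 \<or> f (2*m1+3) = 2*m2+3"
      by (rule deg3[OF m2 fin fin fin fin _ _ _ e]) (use m1 m34 in auto)
    thus ?thesis using m34 by auto
  qed
  have path: "\<forall>q < 2*m1+4. rh m1 q = int v \<longrightarrow> rh m2 (f q) \<le> int v" if "1 \<le> v" "v \<le> 2*m1" for v
    using that
  proof (induction v)
    case 0 thus ?case by simp
  next
    case (Suc v)
    show ?case
    proof (cases "v = 0")
      case True
      have r0: "rh m2 0 = 1" by (simp add: rh_def)
      show ?thesis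
      proof (intro allI impI)
        fix q assume q: "q < 2*m1+4" "rh m1 q = int (Suc v)"
        hence "q = 0" using rh_one[OF q(1) m1] True by simp
        thus "rh m2 (f q) \<le> int (Suc v)" using f0 r0 True by simp
      qed
    next
      case False
      hence IH: "\<forall>q < 2*m1+4. rh m1 q = int v \<longrightarrow> rh m2 (f q) \<le> int v" using Suc by auto
      obtain q' where q': "q' < 2*m1+4" "rh m1 q' = int v" using rh_surj[OF m1, of v] False Suc.prems by auto
      show ?thesis
      proof (intro allI impI)
        fix q assume q: "q < 2*m1+4" "rh m1 q = int (Suc v)"
        have "q \<noteq> q'" using q q' by auto
        hence "\<bar>rh m2 (f q') - rh m2 (f q)\<bar> = 1" using edge[of q' q] q q' by auto
        moreover have "rh m2 (f q') \<le> int v" using IH q' by blast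
        ultimately show "rh m2 (f q) \<le> int (Suc v)" by linarith
      qed
    qed
  qed
  have "rh m2 (f (2*m1+3)) \<le> int (2*m1)" using path[of "2*m1"] r2 m1 by auto
  thus False using fN lt by (simp add: rh_def)
qed


definition E :: "int list \<Rightarrow> nat \<Rightarrow> nat \<Rightarrow> bool" where "E w s t \<longleftrightarrow> \<bar>w!t - w!s\<bar> = 1"
definition rel :: "int list \<Rightarrow> nat \<Rightarrow> bool" where
  "rel w r \<longleftrightarrow> (\<exists>s t. s \<le> r \<and> r < t \<and> t < length w \<and> E w s t)"
definition iso :: "int list \<Rightarrow> nat \<Rightarrow> bool" where
  "iso w r \<longleftrightarrow> \<not>(0 < r \<and> rel w (r-1)) \<and> \<not> rel w (Suc r)"
definition cl :: "int list \<Rightarrow> nat \<Rightarrow> int option" where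
  "cl w r = (if rel w r then (if iso w r then Some (-1) else Some (w!(Suc r) - w!r)) else None)"
definition code :: "int list \<Rightarrow> int option list" where
  "code w = map (cl w) [0..<length w - 1]"

lemma code_nth: "r < length w - 1 \<Longrightarrow> code w ! r = cl w r" by (simp add: code_def)
lemma code_len: "length (code w) = length w - 1" by (simp add: code_def)

lemma rel_notiso:
  assumes "s \<le> r" "r < t" "Suc s < t" "\<forall>x\<in>{s..<t}. rel w x"
  shows "\<not> iso w r"
proof (cases "Suc r < t")
  case True thus ?thesis using assms unfolding iso_def by auto
next
  case False
  hence "0 < r" "r - 1 \<in> {s..<t}" using assms by auto
  thus ?thesis using assms unfolding iso_def by auto
qed

lemma cl_some: "rel w r \<Longrightarrow> \<not> iso w r \<Longrightarrow> cl w r = Some (w!(Suc r) - w!r)" by (simp add: cl_def)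

lemma tele: "s \<le> t \<Longrightarrow> (\<Sum>r\<in>{s..<t}. (w!(Suc r) - w!r)) = w!t - (w!s::int)"
  by (rule sum_Suc_diff')

definition dec :: "int option list \<Rightarrow> nat \<Rightarrow> nat \<Rightarrow> bool" where
  "dec c s t \<longleftrightarrow> (\<forall>r\<in>{s..<t}. c!r \<noteq> None) \<and>
     (if t = Suc s then \<bar>the (c!s)\<bar> = 1 else \<bar>\<Sum>r\<in>{s..<t}. the (c!r)\<bar> = 1)"

lemma code_edge:
  assumes st: "s < t" "t < length w"
  shows "E w s t \<longleftrightarrow> dec (code w) s t"
proof
  assume e: "E w s t"
  have relr: "\<forall>r\<in>{s..<t}. rel w r"
  proof
    fix r assume "r \<in> {s..<t}"
    hence "s \<le> r" "r < t" by auto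
    thus "rel w r" unfolding rel_def using e st by blast
  qed
  have cn: "code w ! r = cl w r" if "r \<in> {s..<t}" for r
  proof -
    have "r < length w - 1" using that st by auto
    thus ?thesis by (rule code_nth)
  qed
  have nn: "\<forall>r\<in>{s..<t}. code w ! r \<noteq> None" using relr cn by (auto simp: cl_def)
  show "dec (code w) s t"
  proof (cases "t = Suc s")
    case True
    have "code w ! s = Some (-1) \<or> code w ! s = Some (w!t - w!s)"
      using cn[of s] relr st True by (auto simp: cl_def)
    thus ?thesis using nn True e unfolding dec_def E_def by auto
  next
    case False
    hence ss: "Suc s < t" using st by simp
    have "code w ! r = Some (w!(Suc r) - w!r)" if "r \<in> {s..<t}" for r
      using cn[OF that] cl_some[of w r] relr rel_notiso[OF _ _ ss relr, of r] that by auto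
    hence "(\<Sum>r\<in>{s..<t}. the (code w ! r)) = (\<Sum>r\<in>{s..<t}. (w!(Suc r) - w!r))" by simp
    also have "\<dots> = w!t - w!s" using st by (simp add: tele)
    finally show ?thesis using nn False e unfolding dec_def E_def by auto
  qed
next
  assume d: "dec (code w) s t"
  have cn: "code w ! r = cl w r" if "r \<in> {s..<t}" for r
  proof -
    have "r < length w - 1" using that st by auto
    thus ?thesis by (rule code_nth)
  qed
  have relr: "\<forall>r\<in>{s..<t}. rel w r" using d cn unfolding dec_def cl_def by (metis (full_types))
  show "E w s t"
  proof (cases "t = Suc s")
    case True
    show ?thesis
    proof (cases "iso w s")
      case True
      obtain s' t' where w: "s' \<le> s" "s < t'" "t' < length w" "E w s' t'" using relr \<open>t = Suc s\<close> rel_def by auto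
      have "s' = s"
      proof (rule ccontr)
        assume "s' \<noteq> s"
        hence "0 < s" "s' \<le> s - 1" "s - 1 < t'" using w by auto
        hence "0 < s" "rel w (s-1)" using w unfolding rel_def by blast+
        thus False using True unfolding iso_def by auto
      qed
      moreover have "t' = Suc s"
      proof (rule ccontr)
        assume "t' \<noteq> Suc s"
        hence "s' \<le> Suc s" "Suc s < t'" using w by auto
        hence "rel w (Suc s)" using w unfolding rel_def by blast
        thus False using True unfolding iso_def by auto
      qed
      ultimately show ?thesis using w \<open>t = Suc s\<close> by simp
    next
      case False
      hence "code w ! s = Some (w!t - w!s)" using cn[of s] relr st \<open>t = Suc s\<close> by (auto simp: cl_def)
      thus ?thesis using d \<open>t = Suc s\<close> unfolding dec_def E_def by simp
    qed
  next
    case False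
    hence ss: "Suc s < t" using st by simp
    have "code w ! r = Some (w!(Suc r) - w!r)" if "r \<in> {s..<t}" for r
      using cn[OF that] cl_some[of w r] relr rel_notiso[OF _ _ ss relr, of r] that by auto
    hence "(\<Sum>r\<in>{s..<t}. the (code w ! r)) = (\<Sum>r\<in>{s..<t}. (w!(Suc r) - w!r))" by simp
    also have "\<dots> = w!t - w!s" using st by (simp add: tele)
    finally show ?thesis using d False unfolding dec_def E_def by auto
  qed
qed

lemma code_eq_edge:
  assumes "length w = length w'" "code w = code w'" "s < t" "t < length w"
  shows "E w s t \<longleftrightarrow> E w' s t"
  using code_edge[of s t w] code_edge[of s t w'] assms by auto


lemma sorted_gap:
  assumes "sorted_wrt (<) (ps::nat list)" "s \<le> t" "t < length ps"
  shows "ps!s + (t - s) \<le> ps!t"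
  using assms(2,3)
proof (induction t)
  case 0 thus ?case by simp
next
  case (Suc t)
  show ?case
  proof (cases "s = Suc t")
    case True thus ?thesis by simp
  next
    case False
    hence "s \<le> t" using Suc by simp
    hence "ps!s + (t - s) \<le> ps!t" using Suc by simp
    moreover have "ps!t < ps!(Suc t)" using sorted_wrt_nth_less[OF assms(1), of t "Suc t"] Suc by simp
    ultimately show ?thesis using \<open>s \<le> t\<close> by linarith
  qed
qed

locale pos_setting =
  fixes m :: nat and ps :: "nat list"
  assumes m2: "m \<ge> 2" and srt: "sorted_wrt (<) ps" and bnd: "\<forall>x\<in>set ps. x < 2*m+4"
begin

abbreviation "n \<equiv> length ps"
definition "w = map (rh m) ps"

lemma w_len[simp]: "length w = n" by (simp add: w_def)
lemma w_nth: "j < n \<Longrightarrow> w!j = rh m (ps!j)" by (simp add: w_def)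
lemma ps_bnd: "j < n \<Longrightarrow> ps!j < 2*m+4" using bnd by auto
lemma gap: "s \<le> t \<Longrightarrow> t < n \<Longrightarrow> ps!s + (t - s) \<le> ps!t" by (rule sorted_gap[OF srt])
lemma lt: "s < t \<Longrightarrow> t < n \<Longrightarrow> ps!s < ps!t" using sorted_wrt_nth_less[OF srt] by auto

lemma span:
  assumes "s < t" "t < n" "E w s t"
  shows "ps!t \<le> ps!s + 7" "t \<le> s + 7"
proof -
  have "\<bar>rh m (ps!t) - rh m (ps!s)\<bar> = 1" using assms by (simp add: E_def w_nth)
  moreover have "\<bar>rh m (ps!t) - int (ps!t)\<bar> \<le> 3" "\<bar>rh m (ps!s) - int (ps!s)\<bar> \<le> 3"
    using rh_bounds[OF ps_bnd m2] assms by auto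
  ultimately show a: "ps!t \<le> ps!s + 7" by linarith
  show "t \<le> s + 7" using gap[of s t] assms a by linarith
qed

lemma letters:
  assumes "x \<in> set (code w)"
  shows "x = None \<or> (\<exists>d. x = Some d \<and> -5 \<le> d \<and> d \<le> 13)"
proof -
  obtain r where r: "r < n - 1" "x = cl w r" using assms by (auto simp: code_def)
  show ?thesis
  proof (cases "rel w r \<and> \<not> iso w r")
    case True
    then obtain s t where st: "s \<le> r" "r < t" "t < n" "E w s t" unfolding rel_def by auto
    have "ps!t \<le> ps!s + 7" using span[of s t] st by auto
    moreover have "ps!s \<le> ps!r" "ps!(Suc r) \<le> ps!t" "ps!r < ps!(Suc r)"
      using gap[of s r] gap[of "Suc r" t] lt[of r "Suc r"] st by auto
    moreover have "\<bar>rh m (ps!r) - int (ps!r)\<bar> \<le> 3" "\<bar>rh m (ps!Suc r) - int (ps!Suc r)\<bar> \<le> 3"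
      using rh_bounds[OF ps_bnd m2] st by auto
    ultimately have "-5 \<le> rh m (ps!Suc r) - rh m (ps!r)" "rh m (ps!Suc r) - rh m (ps!r) \<le> 13" by linarith+
    thus ?thesis using r True st by (auto simp: cl_def w_nth)
  next
    case False thus ?thesis using r by (auto simp: cl_def)
  qed
qed

lemma cl_m1: "Suc j < n \<Longrightarrow> w!(Suc j) - w!j = -1 \<Longrightarrow> cl w j = Some (-1)"
proof -
  assume a: "Suc j < n" "w!(Suc j) - w!j = -1"
  have "rel w j" unfolding rel_def E_def using a by (intro exI[of _ j] exI[of _ "Suc j"]) auto
  thus ?thesis using a by (simp add: cl_def)
qed

lemma cl_other: "cl w x = Some v \<Longrightarrow> v \<noteq> -1 \<Longrightarrow> rel w x \<and> \<not> iso w x \<and> w!(Suc x) - w!x = v"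
  by (auto simp: cl_def split: if_splits)

lemma cl_M: "cl w x = Some (-1) \<Longrightarrow> rel w x \<and> (iso w x \<or> w!(Suc x) - w!x = -1)"
  by (auto simp: cl_def split: if_splits)

end

definition Q :: "int option \<Rightarrow> int option \<Rightarrow> int option \<Rightarrow> bool" where
 "Q a b c \<longleftrightarrow> b \<in> {None, Some (-1), Some 2, Some 3} \<and> \<not>(b = Some (-1) \<and> c = Some (-1)) \<and>
    \<not>(a = Some (-1) \<and> b = Some 2 \<and> c = Some (-1)) \<and> (b = Some 2 \<longrightarrow> a = Some (-1) \<or> c = Some (-1)) \<and>
    (b = Some 3 \<longrightarrow> a = Some (-1) \<and> c = Some (-1))"

locale zone = pos_setting +
  fixes r :: nat
  assumes r12: "12 \<le> r" and rn: "r + 13 \<le> n"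
begin

definition "W j \<longleftrightarrow> r - 8 \<le> j \<and> j \<le> r + 9"

lemma W_n: "W j \<Longrightarrow> j < n" using rn by (simp add: W_def)

lemma plainW: assumes "W j" shows "3 \<le> ps!j" "ps!j \<le> 2*m+1"
proof -
  have "ps!0 + j \<le> ps!j" using gap[of 0 j] W_n[OF assms] by simp
  thus "3 \<le> ps!j" using assms r12 unfolding W_def by arith
  have "ps!j + (n - 1 - j) \<le> ps!(n-1)" using gap[of j "n-1"] W_n[OF assms] by simp
  moreover have "ps!(n-1) < 2*m+4" using ps_bnd[of "n-1"] rn by simp
  ultimately show "ps!j \<le> 2*m+1" using assms rn unfolding W_def by arith
qed

lemma rhW: "W j \<Longrightarrow> w!j = int (ps!j) - (if even (ps!j) then 2 else 0)"
  using rh_plain[OF plainW] W_n by (auto simp: w_nth)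

lemma par: obtains i where "(k::nat) = 2*i" "even k" | i where "k = 2*i+1" "odd k"
  by (metis evenE oddE)

lemma LE:
  assumes "s < t" "W s" "W t"
  shows "E w s t \<longleftrightarrow> odd (ps!s) \<and> even (ps!t) \<and> (ps!t = ps!s + 1 \<or> ps!t = ps!s + 3)"
proof -
  have l: "ps!s < ps!t" using lt[OF assms(1) W_n[OF assms(3)]] .
  show ?thesis unfolding E_def rhW[OF assms(2)] rhW[OF assms(3)]
    using l by (cases "ps!s" rule: par; cases "ps!t" rule: par; simp; arith)
qed

lemma cover:
  assumes "rel w x" "r - 2 \<le> x" "x \<le> r + 2"
  obtains s t where "s \<le> x" "x < t" "t < n" "E w s t" "W s" "W t"
proof -
  obtain s t where st: "s \<le> x" "x < t" "t < n" "E w s t" using assms(1) rel_def by auto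
  have "t \<le> s + 7" using span(2)[of s t] st by auto
  hence "W s" "W t" using st assms r12 unfolding W_def by auto
  thus ?thesis using that st by blast
qed

abbreviation "d j \<equiv> w!(Suc j) - w!j"

lemma classify:
  assumes "s < t" "W s" "W t" "E w s t"
  shows "(t = s+1 \<and> (d s = -1 \<or> (d s = 1 \<and> odd (ps!s) \<and> ps!(s+1) = ps!s + 3))) \<or>
         (t = s+2 \<and> ((d s = -1 \<and> d (s+1) = 2) \<or> (d s = 2 \<and> d (s+1) = -1))) \<or>
         (t = s+3 \<and> d s = -1 \<and> d (s+1) = 3 \<and> d (s+2) = -1)"
proof -
  have le: "odd (ps!s)" "even (ps!t)" "ps!t = ps!s + 1 \<or> ps!t = ps!s + 3" using LE assms by auto
  have "ps!s + (t - s) \<le> ps!t" using gap[of s t] assms W_n by auto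
  hence "t = s+1 \<or> t = s+2 \<or> t = s+3" using le(3) assms(1) by linarith
  moreover have Wb: "W j" if "s \<le> j" "j \<le> t" for j using assms(2,3) that unfolding W_def by auto
  moreover obtain i where i: "ps!s = 2*i+1" using le(1) oddE by blast
  ultimately consider "t = s+1" | "t = s+2" | "t = s+3" by blast
  thus ?thesis
  proof cases
    case 1
    have "w!t - w!s = -1 \<or> w!t - w!s = 1" using le i rhW[OF assms(2)] rhW[OF assms(3)] by auto
    thus ?thesis using 1 le i rhW[OF assms(2)] rhW[OF assms(3)] by auto
  next
    case 2
    have W1: "W (s+1)" using Wb 2 by auto
    have "ps!s < ps!(s+1)" "ps!(s+1) < ps!t" using lt[of s "s+1"] lt[of "s+1" t] 2 W_n[OF assms(3)] by auto
    moreover have "ps!t = ps!s + 3" using le(3) 2 \<open>ps!s + (t - s) \<le> ps!t\<close> by auto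
    ultimately have "ps!(s+1) = 2*i+2 \<or> ps!(s+1) = 2*i+3" using i by auto
    thus ?thesis using 2 i \<open>ps!t = ps!s + 3\<close> rhW[OF assms(2)] rhW[OF assms(3)] rhW[OF W1] by auto
  next
    case 3
    have W1: "W (s+1)" "W (s+2)" using Wb 3 by auto
    have "ps!s < ps!(s+1)" "ps!(s+1) < ps!(s+2)" "ps!(s+2) < ps!t"
      using lt[of s "s+1"] lt[of "s+1" "s+2"] lt[of "s+2" t] 3 W_n[OF assms(3)] by auto
    moreover have "ps!t = ps!s + 3" using le(3) 3 \<open>ps!s + (t - s) \<le> ps!t\<close> by auto
    ultimately have "ps!(s+1) = 2*i+2" "ps!(s+2) = 2*i+3" using i by auto
    thus ?thesis using 3 i \<open>ps!t = ps!s + 3\<close> rhW[OF assms(2)] rhW[OF assms(3)] rhW[OF W1(1)] rhW[OF W1(2)]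
      by (auto simp: numeral_3_eq_3)
  qed
qed

lemma D1:
  assumes "W j" "W (Suc j)" "d j = -1"
  shows "odd (ps!j) \<and> ps!(Suc j) = ps!j + 1"
proof -
  have l: "ps!j < ps!(Suc j)" using lt[of j "Suc j"] W_n[OF assms(2)] by simp
  show ?thesis using assms(3) l unfolding rhW[OF assms(1)] rhW[OF assms(2)]
    by (cases "ps!j" rule: par; cases "ps!(Suc j)" rule: par; simp; arith)
qed

lemma Wr: "r - 2 \<le> x \<Longrightarrow> x \<le> r + 2 \<Longrightarrow> W (x - 1) \<and> W x \<and> W (Suc x) \<and> W (x+2) \<and> W (x+3) \<and> x > 0"
  using r12 unfolding W_def by auto

lemma iso_d1:
  assumes x: "r - 1 \<le> x" "x \<le> r + 1" and o: "odd (ps!x)" "ps!(Suc x) = ps!x + 3"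
  shows "iso w x"
proof -
  have WW: "W (x - 1)" "W x" "W (Suc x)" "W (x+2)" "0 < x" using Wr[of x] x by auto
  have n: "x + 2 < n" using W_n[OF WW(4)] .
  have "\<not> rel w (Suc x)"
  proof
    assume "rel w (Suc x)"
    moreover have "r - 2 \<le> Suc x" "Suc x \<le> r + 2" using x by auto
    ultimately obtain s t where st: "s \<le> Suc x" "Suc x < t" "t < n" "E w s t" "W s" "W t"
      by (rule cover)
    have le: "odd (ps!s)" "even (ps!t)" "ps!t \<le> ps!s + 3" using LE[of s t] st by auto
    show False
    proof (cases "s = Suc x")
      case True thus False using le o by simp
    next
      case False
      hence "s \<le> x" using st by simp
      hence "ps!s \<le> ps!x" using gap[of s x] n by simp
      moreover have "ps!(x+2) \<le> ps!t" using gap[of "x+2" t] st by simp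
      moreover have "ps!(Suc x) < ps!(x+2)" using lt[of "Suc x" "x+2"] n by simp
      ultimately show False using le o by simp
    qed
  qed
  moreover have "\<not> rel w (x - 1)"
  proof
    assume "rel w (x - 1)"
    moreover have "r - 2 \<le> x - 1" "x - 1 \<le> r + 2" using x by auto
    ultimately obtain s t where st: "s \<le> x - 1" "x - 1 < t" "t < n" "E w s t" "W s" "W t"
      by (rule cover)
    have le: "odd (ps!s)" "even (ps!t)" "ps!t \<le> ps!s + 3" using LE[of s t] st WW by auto
    show False
    proof (cases "t = x")
      case True thus False using le o by simp
    next
      case False
      hence "Suc x \<le> t" using st by simp
      hence "ps!(Suc x) \<le> ps!t" using gap[of "Suc x" t] st by simp
      moreover have "ps!s \<le> ps!(x-1)" using gap[of s "x-1"] st n by simp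
      moreover have "ps!(x-1) < ps!x" using lt[of "x-1" x] n WW by simp
      ultimately show False using le o by simp
    qed
  qed
  ultimately show ?thesis unfolding iso_def by auto
qed

lemma relI: "s \<le> x \<Longrightarrow> x < t \<Longrightarrow> t < n \<Longrightarrow> E w s t \<Longrightarrow> rel w x"
  unfolding rel_def by auto

lemma notiso_st: "s \<le> x \<Longrightarrow> x < t \<Longrightarrow> Suc s < t \<Longrightarrow> t < n \<Longrightarrow> E w s t \<Longrightarrow> \<not> iso w x"
  by (rule rel_notiso) (auto intro: relI)

lemma zone_Q: "Q (code w ! (r-1)) (code w ! r) (code w ! (r+1))"
proof -
  have WW: "W (r-1)" "W r" "W (Suc r)" "W (r+2)" using Wr[of r] by auto
  have n: "r + 2 < n" using W_n[OF WW(4)] .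
  have c: "code w ! (r-1) = cl w (r-1)" "code w ! r = cl w r" "code w ! (r+1) = cl w (Suc r)"
    using n r12 by (auto simp: code_nth)
  have rr: "Suc (r - 1) = r" using r12 by simp
  have C1: "cl w r \<in> {None, Some (-1), Some 2, Some 3}"
  proof (cases "rel w r")
    case False thus ?thesis by (simp add: cl_def)
  next
    case True
    then obtain s t where st: "s \<le> r" "r < t" "t < n" "E w s t" "W s" "W t" using cover[of r] by auto
    have sst: "s < t" using st by simp
    have cls: "cl w r = Some (d r)" if "\<not> iso w r" using that True by (simp add: cl_def)
    from classify[OF sst st(5) st(6) st(4)] show ?thesis
    proof (elim disjE conjE)
      assume a: "t = s + 1" "d s = -1"
      hence "r = s" using st by simp
      hence "cl w r = Some (-1)" using cl_m1[of r] a n by simp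
      thus ?thesis by simp
    next
      assume a: "t = s + 1" "d s = 1" "odd (ps!s)" "ps!(s+1) = ps!s + 3"
      hence "s = r" using st by simp
      hence "iso w r" using iso_d1[of r] a r12 by auto
      thus ?thesis using True by (simp add: cl_def)
    next
      assume a: "t = s + 2" "d s = -1" "d (s+1) = 2"
      hence "\<not> iso w r" using notiso_st[of s r t] st by auto
      moreover have "r = s \<or> r = s + 1" using a st by auto
      ultimately show ?thesis using cls a by auto
    next
      assume a: "t = s + 2" "d s = 2" "d (s+1) = -1"
      hence "\<not> iso w r" using notiso_st[of s r t] st by auto
      moreover have "r = s \<or> r = s + 1" using a st by auto
      ultimately show ?thesis using cls a by auto
    next
      assume a: "t = s + 3" "d s = -1" "d (s+1) = 3" "d (s+2) = -1"
      hence "\<not> iso w r" using notiso_st[of s r t] st by auto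
      moreover have "r = s \<or> r = s + 1 \<or> r = s + 2" using a st by auto
      ultimately show ?thesis using cls a by auto
    qed
  qed
  have C2: "\<not> (cl w r = Some (-1) \<and> cl w (Suc r) = Some (-1))"
  proof
    assume a: "cl w r = Some (-1) \<and> cl w (Suc r) = Some (-1)"
    have r1: "rel w r" "iso w r \<or> d r = -1" using cl_M a by auto
    have r2: "rel w (Suc r)" "iso w (Suc r) \<or> d (Suc r) = -1" using cl_M a by auto
    have "d r = -1" using r1 r2 unfolding iso_def by auto
    moreover have "d (Suc r) = -1" using r1 r2 unfolding iso_def by auto
    ultimately show False using D1[OF WW(2) WW(3)] D1[OF WW(3)] WW by auto
  qed
  have C3: "\<not> (cl w (r-1) = Some (-1) \<and> cl w r = Some 2 \<and> cl w (Suc r) = Some (-1))"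
  proof
    assume a: "cl w (r-1) = Some (-1) \<and> cl w r = Some 2 \<and> cl w (Suc r) = Some (-1)"
    have b: "rel w r" "d r = 2" using cl_other[of r 2] a by auto
    have "iso w (r-1) \<or> d (r-1) = -1" using cl_M a by auto
    hence "d (r-1) = -1" using b rr unfolding iso_def by auto
    hence e1: "odd (ps!(r-1)) \<and> ps!r = ps!(r-1) + 1" using D1[OF WW(1)] WW rr by auto
    have "iso w (Suc r) \<or> d (Suc r) = -1" using cl_M a by auto
    hence "d (Suc r) = -1" using b unfolding iso_def by auto
    hence e2: "odd (ps!(Suc r))" using D1[OF WW(3)] WW by auto
    have "ps!r < ps!(Suc r)" using lt[of r "Suc r"] n by simp
    thus False using b(2) e1 e2 unfolding rhW[OF WW(2)] rhW[OF WW(3)] by auto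
  qed
  have C45: "(cl w r = Some 2 \<longrightarrow> cl w (r-1) = Some (-1) \<or> cl w (Suc r) = Some (-1)) \<and>
             (cl w r = Some 3 \<longrightarrow> cl w (r-1) = Some (-1) \<and> cl w (Suc r) = Some (-1))"
  proof (rule conjI; intro impI)
    assume a: "cl w r = Some 2"
    have b: "rel w r" "d r = 2" using cl_other[of r 2] a by auto
    then obtain s t where st: "s \<le> r" "r < t" "t < n" "E w s t" "W s" "W t" using cover[of r] by auto
    have sst: "s < t" using st by simp
    from classify[OF sst st(5) st(6) st(4)] show "cl w (r-1) = Some (-1) \<or> cl w (Suc r) = Some (-1)"
    proof (elim disjE conjE)
      assume a: "t = s + 1" "d s = -1"
      hence "r = s" using st by simp
      thus ?thesis using a b by simp
    next
      assume a: "t = s + 1" "d s = 1"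
      hence "r = s" using st by simp
      thus ?thesis using a b by simp
    next
      assume a: "t = s + 2" "d s = -1" "d (s+1) = 2"
      hence "r = s \<or> r = Suc s" using st by auto
      hence "r = s + 1" using a b by auto
      thus ?thesis using a cl_m1[of "r-1"] rr n by auto
    next
      assume a: "t = s + 2" "d s = 2" "d (s+1) = -1"
      hence "r = s \<or> r = Suc s" using st by auto
      hence "r = s" using a b by auto
      thus ?thesis using a cl_m1[of "Suc r"] n by auto
    next
      assume a: "t = s + 3" "d s = -1" "d (s+1) = 3" "d (s+2) = -1"
      hence "r = s \<or> r = s + 1 \<or> r = s + 2" using st by auto
      thus ?thesis using a b by auto
    qed
  next
    assume a: "cl w r = Some 3"
    have b: "rel w r" "d r = 3" using cl_other[of r 3] a by auto
    then obtain s t where st: "s \<le> r" "r < t" "t < n" "E w s t" "W s" "W t" using cover[of r] by auto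
    have sst: "s < t" using st by simp
    from classify[OF sst st(5) st(6) st(4)] show "cl w (r-1) = Some (-1) \<and> cl w (Suc r) = Some (-1)"
    proof (elim disjE conjE)
      assume a: "t = s + 1" "d s = -1"
      hence "r = s" using st by simp
      thus ?thesis using a b by simp
    next
      assume a: "t = s + 1" "d s = 1"
      hence "r = s" using st by simp
      thus ?thesis using a b by simp
    next
      assume a: "t = s + 2" "d s = -1" "d (s+1) = 2"
      hence "r = s \<or> r = s + 1" using st by auto
      thus ?thesis using a b by auto
    next
      assume a: "t = s + 2" "d s = 2" "d (s+1) = -1"
      hence "r = s \<or> r = s + 1" using st by auto
      thus ?thesis using a b by auto
    next
      assume a: "t = s + 3" "d s = -1" "d (s+1) = 3" "d (s+2) = -1"
      hence "r = s \<or> r = Suc s \<or> r = Suc (Suc s)" using st by auto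
      hence "r = s + 1" using a b by auto
      thus ?thesis using a cl_m1[of "r-1"] cl_m1[of "Suc r"] rr n by auto
    qed
  qed
  show ?thesis unfolding c Q_def using C1 C2 C3 C45 by simp
qed

end


definition pp :: "real \<Rightarrow> real" where "pp x = x^5 - x^4 - 2*x^3 - 2*x^2 - x - 1"

lemma pp_neg0: assumes "x \<le> 0" shows "pp x < 0"
proof -
  have a: "pp x = x * (x^4 - 1) - 1 - x^2 * ((x+1)^2 + 1)"
    unfolding pp_def by (simp add: eval_nat_numeral algebra_simps)
  have b: "x^2 * ((x+1)^2 + 1) \<ge> 0" by simp
  have c: "x * (x^4 - 1) - 1 < 0"
  proof (cases "x \<le> -1")
    case True
    have "1 \<le> (-x)^2" using True by (intro one_le_power) auto
    hence "1 \<le> x^2" by simp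
    hence "1 \<le> x^2 * x^2" using mult_mono[of 1 "x^2" 1 "x^2"] by simp
    hence "x^4 - 1 \<ge> 0" by (simp add: power4_eq_xxxx power2_eq_square mult.assoc)
    hence "x * (x^4 - 1) \<le> 0" using assms by (simp add: mult_nonpos_nonneg)
    thus ?thesis by simp
  next
    case False
    have "x * x^4 \<le> 0" using assms by (simp add: mult_nonpos_nonneg)
    thus ?thesis using False by (simp add: algebra_simps)
  qed
  show ?thesis using a b c by linarith
qed

definition qq :: "real \<Rightarrow> real" where "qq u = 1 - u - 2*u^2 - 2*u^3 - u^4 - u^5"

lemma pp_qq: "x > 0 \<Longrightarrow> pp x = x^5 * qq (1/x)"
  unfolding pp_def qq_def by (simp add: field_simps power2_eq_square power3_eq_cube power4_eq_xxxx)
    (simp add: power_def eval_nat_numeral algebra_simps)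

lemma qq_mono: assumes "0 < v" "v < u" shows "qq u < qq v"
proof -
  have "v^2 < u^2" "v^3 < u^3" "v^4 < u^4" "v^5 < u^5" using assms by (auto intro: power_strict_mono)
  thus ?thesis unfolding qq_def using assms by linarith
qed

lemma pp_zero_iff: "x > 0 \<Longrightarrow> pp x = 0 \<longleftrightarrow> qq (1/x) = 0"
  using pp_qq by simp

lemma qq_23: "qq (10/23) < 0" unfolding qq_def by (simp add: power_def eval_nat_numeral)

lemma pp_3: "pp 3 > 0" unfolding pp_def by (simp add: power_def eval_nat_numeral)
lemma pp_23: "pp (23/10) < 0" unfolding pp_def by (simp add: power_def eval_nat_numeral)

lemma pp_unique: "pp x = 0 \<Longrightarrow> pp y = 0 \<Longrightarrow> x = y"
proof -
  assume a: "pp x = 0" "pp y = 0"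
  have p: "x > 0" "y > 0" using pp_neg0 a by (metis not_less less_irrefl)+
  have q: "qq (1/x) = 0" "qq (1/y) = 0" using pp_zero_iff p a by auto
  show "x = y"
  proof (rule ccontr)
    assume "x \<noteq> y"
    hence "x < y \<or> y < x" by auto
    thus False
    proof
      assume "x < y" hence "1/y < 1/x" using p by (simp add: frac_less2)
      thus False using qq_mono[of "1/y" "1/x"] p q by simp
    next
      assume "y < x" hence "1/x < 1/y" using p by (simp add: frac_less2)
      thus False using qq_mono[of "1/x" "1/y"] p q by simp
    qed
  qed
qed

lemma pp_exists: "\<exists>x. pp x = 0 \<and> 23/10 \<le> x"
proof -
  have "continuous_on {23/10..3} pp" unfolding pp_def by (intro continuous_intros)
  moreover have "pp (23/10) \<le> 0" "0 \<le> pp 3" using pp_23 pp_3 by auto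
  ultimately obtain x where "23/10 \<le> x" "x \<le> 3" "pp x = 0"
    using IVT'[of pp "23/10" 0 3] by auto
  thus ?thesis by auto
qed

lemma root_ge: "root_const \<ge> 23/10"
proof -
  obtain x where x: "pp x = 0" "23/10 \<le> x" using pp_exists by auto
  have "root_const = x" unfolding root_const_def
  proof (rule the_equality)
    show "x^5 - x^4 - 2*x^3 - 2*x^2 - x - 1 = 0" using x pp_def by simp
    fix y :: real assume "y^5 - y^4 - 2*y^3 - 2*y^2 - y - 1 = 0"
    thus "y = x" using pp_unique[of y x] x pp_def by simp
  qed
  thus ?thesis using x by simp
qed


definition plainL :: "int option set" where "plainL = {None, Some (-1), Some 2, Some 3}"

definition Pset :: "nat \<Rightarrow> int option list set" where
  "Pset L = {v. length v = L \<and> set v \<subseteq> plainL \<and> (\<forall>i. 0 < i \<longrightarrow> Suc i < L \<longrightarrow> Q (v!(i-1)) (v!i) (v!(Suc i)))}"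

definition phi :: "int option \<Rightarrow> int option \<Rightarrow> real" where
  "phi a b = (if b = None then 122 else if b = Some (-1) then 107 else
              if b = Some 2 then (if a = Some (-1) then 75 else 48) else
              if b = Some 3 then (if a = Some (-1) then 48 else 1) else 1)"

lemma phi_ge1: "phi a b \<ge> 1" by (simp add: phi_def)
lemma phi_le: "phi a b \<le> 122" by (simp add: phi_def)

lemma fin_plain: "finite plainL" by (simp add: plainL_def)

lemma sum4: "(\<Sum>c\<in>plainL. f c) = f None + f (Some (-1)) + f (Some 2) + f (Some 3)"
  unfolding plainL_def by (simp add: add.assoc)

lemma phi_ineq: "a \<in> plainL \<Longrightarrow> b \<in> plainL \<Longrightarrow>
  (\<Sum>c\<in>plainL. if Q a b c then phi b c else 0) \<le> (23/10) * phi a b"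
  unfolding sum4 unfolding plainL_def by (elim insertE; simp add: Q_def phi_def)

lemma Pset_fin: "finite (Pset L)"
proof -
  have "Pset L \<subseteq> {xs. set xs \<subseteq> plainL \<and> length xs = L}" by (auto simp: Pset_def)
  thus ?thesis using finite_lists_length_eq[OF fin_plain] finite_subset by blast
qed

definition PS :: "nat \<Rightarrow> int option \<Rightarrow> int option \<Rightarrow> int option list set" where
  "PS L a b = {v \<in> Pset (L+2). v!0 = a \<and> v!1 = b}"

lemma PS_step: "PS (Suc L) a b \<subseteq> (\<lambda>v. a # v) ` (\<Union>c\<in>plainL. if Q a b c then PS L b c else {})"
proof
  fix v assume v: "v \<in> PS (Suc L) a b"
  hence len: "length v = L + 3" and sv: "set v \<subseteq> plainL" and v0: "v!0 = a" and v1: "v!1 = b"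
    and Qv: "\<forall>i. 0 < i \<longrightarrow> Suc i < L+3 \<longrightarrow> Q (v!(i-1)) (v!i) (v!(Suc i))"
    by (auto simp: PS_def Pset_def)
  obtain u where u: "v = a # u" using len v0 by (cases v) auto
  have lu: "length u = L + 2" using len u by simp
  have "u \<in> PS L b (v!2)"
    unfolding PS_def Pset_def
  proof (intro CollectI conjI allI impI)
    show "length u = L + 2" by fact
    show "set u \<subseteq> plainL" using sv u by auto
    show "u!0 = b" using v1 u by simp
    show "u!1 = v!2" using u by (simp add: numeral_2_eq_2)
    fix i assume "0 < i" "Suc i < L + 2"
    thus "Q (u!(i-1)) (u!i) (u!Suc i)" using Qv[rule_format, of "Suc i"] u by (cases i) auto
  qed
  moreover have "v!2 \<in> plainL" using sv len by (auto simp: nth_mem subset_iff)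
  moreover have "Q a b (v!2)" using Qv[rule_format, of 1] v0 v1 by (simp add: numeral_2_eq_2)
  ultimately have "u \<in> (\<Union>c\<in>plainL. if Q a b c then PS L b c else {})"
    by (intro UN_I[of "v!2"]) auto
  thus "v \<in> (\<lambda>v. a # v) ` (\<Union>c\<in>plainL. if Q a b c then PS L b c else {})"
    unfolding u by (rule imageI)
qed

lemma PS_fin: "finite (PS L a b)"
  using Pset_fin[of "L+2"] by (simp add: PS_def)

lemma fin_U: "finite (\<Union>c\<in>plainL. if Q a b c then PS L b c else {})"
  by (rule finite_UN_I[OF fin_plain]) (simp add: PS_fin)

lemma PS_card: "a \<in> plainL \<Longrightarrow> b \<in> plainL \<Longrightarrow> real (card (PS L a b)) \<le> phi a b * (23/10)^L"
proof (induction L arbitrary: a b)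
  case 0
  have "PS 0 a b \<subseteq> {[a,b]}"
  proof
    fix v assume "v \<in> PS 0 a b"
    hence "length v = 2" "v!0 = a" "v!1 = b" by (auto simp: PS_def Pset_def)
    thus "v \<in> {[a,b]}" by (cases v; cases "tl v") auto
  qed
  hence "card (PS 0 a b) \<le> card {[a,b]}" by (intro card_mono) auto
  hence "card (PS 0 a b) \<le> 1" by simp
  thus ?case using phi_ge1[of a b] by simp
next
  case (Suc L)
  have "card (PS (Suc L) a b) \<le> card ((\<lambda>v. a # v) ` (\<Union>c\<in>plainL. if Q a b c then PS L b c else {}))"
    by (rule card_mono[OF finite_imageI[OF fin_U] PS_step])
  also have "\<dots> \<le> card (\<Union>c\<in>plainL. if Q a b c then PS L b c else {})" by (rule card_image_le[OF fin_U])
  also have "\<dots> \<le> (\<Sum>c\<in>plainL. card (if Q a b c then PS L b c else {}))"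
    by (rule card_UN_le[OF fin_plain, of "\<lambda>c. if Q a b c then PS L b c else {}"])
  finally have "real (card (PS (Suc L) a b)) \<le> real (\<Sum>c\<in>plainL. card (if Q a b c then PS L b c else {}))"
    by (rule of_nat_mono)
  also have "\<dots> = (\<Sum>c\<in>plainL. real (card (if Q a b c then PS L b c else {})))"
    by (rule of_nat_sum)
  also have "\<dots> \<le> (\<Sum>c\<in>plainL. (if Q a b c then phi b c else 0) * (23/10)^L)"
  proof (rule sum_mono)
    fix c assume "c \<in> plainL"
    thus "real (card (if Q a b c then PS L b c else {})) \<le> (if Q a b c then phi b c else 0) * (23/10)^L"
      using Suc.IH[of b c] Suc.prems by auto
  qed
  also have "\<dots> = (\<Sum>c\<in>plainL. (if Q a b c then phi b c else 0)) * (23/10)^L" by (simp add: sum_distrib_right)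
  also have "\<dots> \<le> (23/10) * phi a b * (23/10)^L"
    using phi_ineq[OF Suc.prems] by (intro mult_right_mono) auto
  finally show ?case by simp
qed

lemma Pset_card: "real (card (Pset L)) \<le> 2000 * (23/10)^L"
proof (cases "L < 2")
  case True
  have "card (Pset L) \<le> card {xs. set xs \<subseteq> plainL \<and> length xs = L}"
    by (rule card_mono) (auto simp: Pset_def finite_lists_length_eq fin_plain)
  also have "\<dots> = card plainL ^ L" by (rule card_lists_length_eq[OF fin_plain])
  also have "\<dots> \<le> 4 ^ L" by (intro power_mono) (auto simp: plainL_def card_insert_le_m1)
  also have "\<dots> \<le> 4" using True by (cases L) auto
  finally have "real (card (Pset L)) \<le> 4" by simp
  moreover have "(1::real) \<le> (23/10)^L" by simp
  ultimately show ?thesis by linarith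
next
  case False
  obtain L' where L: "L = L' + 2" using False by (intro that[of "L-2"]) simp
  have "Pset L \<subseteq> (\<Union>a\<in>plainL. \<Union>b\<in>plainL. PS L' a b)"
  proof
    fix v assume v: "v \<in> Pset L"
    hence "v!0 \<in> plainL" "v!1 \<in> plainL" using L by (auto simp: Pset_def nth_mem subset_iff)
    thus "v \<in> (\<Union>a\<in>plainL. \<Union>b\<in>plainL. PS L' a b)" using v L by (auto simp: PS_def)
  qed
  moreover have "finite (\<Union>a\<in>plainL. \<Union>b\<in>plainL. PS L' a b)"
    by (intro finite_UN_I fin_plain PS_fin)
  ultimately have "card (Pset L) \<le> card (\<Union>a\<in>plainL. \<Union>b\<in>plainL. PS L' a b)"
    by (intro card_mono)
  also have "\<dots> \<le> (\<Sum>a\<in>plainL. card (\<Union>b\<in>plainL. PS L' a b))"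
    by (rule card_UN_le[OF fin_plain, of "\<lambda>a. \<Union>b\<in>plainL. PS L' a b"])
  also have "\<dots> \<le> (\<Sum>a\<in>plainL. \<Sum>b\<in>plainL. card (PS L' a b))"
  proof (rule sum_mono)
    fix a assume "a \<in> plainL"
    show "card (\<Union>b\<in>plainL. PS L' a b) \<le> (\<Sum>b\<in>plainL. card (PS L' a b))"
      by (rule card_UN_le[OF fin_plain, of "\<lambda>b. PS L' a b"])
  qed
  finally have "real (card (Pset L)) \<le> real (\<Sum>a\<in>plainL. \<Sum>b\<in>plainL. card (PS L' a b))"
    by (rule of_nat_mono)
  also have "\<dots> = (\<Sum>a\<in>plainL. \<Sum>b\<in>plainL. real (card (PS L' a b)))"
    by simp
  also have "\<dots> \<le> (\<Sum>a\<in>plainL. \<Sum>b\<in>plainL. 122 * (23/10)^L')"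
  proof (intro sum_mono)
    fix a b assume "a \<in> plainL" "b \<in> plainL"
    thus "real (card (PS L' a b)) \<le> 122 * (23/10)^L'"
    proof -
      have "phi a b * (23/10)^L' \<le> 122 * (23/10)^L'" by (rule mult_right_mono[OF phi_le]) simp
      thus ?thesis using PS_card[of a b L'] \<open>a \<in> plainL\<close> \<open>b \<in> plainL\<close> by linarith
    qed
  qed
  also have "\<dots> = 16 * 122 * (23/10)^L'" by (simp add: plainL_def)
  also have "\<dots> \<le> 2000 * (23/10)^L" using L by simp
  finally show ?thesis .
qed


definition Afull :: "int option set" where "Afull = insert None (Some ` {-5..13})"

lemma Afull_fin: "finite Afull" by (simp add: Afull_def)
lemma Afull_card: "card Afull \<le> 20"
proof -
  have "card Afull \<le> Suc (card (Some ` {-5..13::int}))" unfolding Afull_def by (rule card_insert_le_m1[THEN le_trans]) auto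
  also have "card (Some ` {-5..13::int}) \<le> card {-5..13::int}" by (rule card_image_le) simp
  finally show ?thesis by simp
qed

definition Codes :: "nat \<Rightarrow> int option list set" where
  "Codes L = {c. length c = L \<and> set c \<subseteq> Afull \<and> (\<forall>r. 12 \<le> r \<longrightarrow> r + 12 \<le> L \<longrightarrow> Q (c!(r-1)) (c!r) (c!(Suc r)))}"

definition LL :: "nat \<Rightarrow> int option list set" where "LL k = {xs. set xs \<subseteq> Afull \<and> length xs = k}"

lemma LL_fin: "finite (LL k)" unfolding LL_def by (rule finite_lists_length_eq[OF Afull_fin])
lemma LL_card: "card (LL k) \<le> 20^k"
  unfolding LL_def card_lists_length_eq[OF Afull_fin] by (rule power_mono[OF Afull_card]) simp

lemma Codes_sub: "Codes L \<subseteq> LL L" by (auto simp: Codes_def LL_def)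
lemma Codes_fin: "finite (Codes L)" using finite_subset[OF Codes_sub LL_fin] .

lemma Codes_card: "real (card (Codes L)) \<le> 20^24 * 2000 * (23/10)^L"
proof (cases "L < 24")
  case True
  have "card (Codes L) \<le> card (LL L)" by (rule card_mono[OF LL_fin Codes_sub])
  also have "\<dots> \<le> 20^L" by (rule LL_card)
  also have "\<dots> \<le> 20^24" using True by (intro power_increasing) auto
  finally have "real (card (Codes L)) \<le> 20^24" by (simp add: of_nat_le_iff[symmetric])
  moreover have "(1::real) \<le> 2000 * (23/10)^L" using one_le_power[of "23/10::real" L] by linarith
  hence "(20::real)^24 * 1 \<le> 20^24 * (2000 * (23/10)^L)" by (intro mult_left_mono) auto
  hence "(20::real)^24 \<le> 20^24 * 2000 * (23/10)^L" by (simp only: mult.assoc mult_1_right)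
  ultimately show ?thesis by linarith
next
  case False
  hence L: "24 \<le> L" by simp
  define h where "h c = (take 12 c, drop (L-12) c, take (L-24) (drop 12 c))" for c :: "int option list"
  have dec: "c = take 12 c @ take (L-24) (drop 12 c) @ drop (L-12) c" if "length c = L" for c :: "int option list"
  proof -
    have e: "drop (L-24) (drop 12 c) = drop (L-12) c" using L by (simp add: drop_drop)
    have "drop 12 c = take (L-24) (drop 12 c) @ drop (L-12) c"
      by (simp only: e[symmetric] append_take_drop_id)
    moreover have "c = take 12 c @ drop 12 c" by simp
    ultimately show ?thesis by simp
  qed
  have inj: "inj_on h (Codes L)"
  proof (rule inj_onI)
    fix c c' assume cc: "c \<in> Codes L" "c' \<in> Codes L" "h c = h c'"
    hence lc: "length c = L" "length c' = L" by (auto simp: Codes_def)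
    have eqs: "take 12 c = take 12 c'" "drop (L-12) c = drop (L-12) c'" "take (L-24) (drop 12 c) = take (L-24) (drop 12 c')"
      using cc(3) unfolding h_def by auto
    have "c = take 12 c @ take (L-24) (drop 12 c) @ drop (L-12) c" by (rule dec[OF lc(1)])
    also have "\<dots> = take 12 c' @ take (L-24) (drop 12 c') @ drop (L-12) c'" by (simp only: eqs)
    also have "\<dots> = c'" by (rule dec[OF lc(2), symmetric])
    finally show "c = c'" .
  qed
  have img: "h ` Codes L \<subseteq> LL 12 \<times> LL 12 \<times> Pset (L-24)"
  proof
    fix x assume "x \<in> h ` Codes L"
    then obtain c where c: "c \<in> Codes L" "x = h c" by auto
    have lc: "length c = L" and sc: "set c \<subseteq> Afull"
      and Qc: "\<And>r. 12 \<le> r \<Longrightarrow> r + 12 \<le> L \<Longrightarrow> Q (c!(r-1)) (c!r) (c!(Suc r))" using c by (auto simp: Codes_def)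
    have "take 12 c \<in> LL 12" "drop (L-12) c \<in> LL 12" using lc sc L
      by (auto simp: LL_def dest: in_set_takeD in_set_dropD)
    moreover have "take (L-24) (drop 12 c) \<in> Pset (L-24)"
    proof -
      let ?v = "take (L-24) (drop 12 c)"
      have lv: "length ?v = L - 24" using lc L by simp
      have vn: "?v!i = c!(12+i)" if "i < L-24" for i using that lc by simp
      have "?v!i \<in> plainL" if "i < L-24" for i
        using Qc[of "12+i"] that vn[OF that] L unfolding Q_def plainL_def by auto
      hence "set ?v \<subseteq> plainL" using lv by (auto simp: in_set_conv_nth)
      moreover have "Q (?v!(i-1)) (?v!i) (?v!(Suc i))" if "0 < i" "Suc i < L-24" for i
      proof -
        have "Q (c!(12+i-1)) (c!(12+i)) (c!(Suc (12+i)))" using Qc[of "12+i"] that by simp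
        moreover have "?v!(i-1) = c!(12+i-1)" "?v!i = c!(12+i)" "?v!(Suc i) = c!(Suc (12+i))"
          using vn[of "i-1"] vn[of i] vn[of "Suc i"] that by auto
        ultimately show ?thesis by simp
      qed
      ultimately show ?thesis unfolding Pset_def using lv by auto
    qed
    ultimately show "x \<in> LL 12 \<times> LL 12 \<times> Pset (L-24)" using c unfolding h_def by auto
  qed
  have "card (Codes L) \<le> card (LL 12 \<times> LL 12 \<times> Pset (L-24))"
    by (rule card_inj_on_le[OF inj img]) (intro finite_cartesian_product LL_fin Pset_fin)
  also have "\<dots> = card (LL 12) * card (LL 12) * card (Pset (L-24))" by (simp add: card_cartesian_product)
  finally have "real (card (Codes L)) \<le> real (card (LL 12) * card (LL 12) * card (Pset (L-24)))"
    by (rule of_nat_mono)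
  also have "\<dots> = real (card (LL 12)) * real (card (LL 12)) * real (card (Pset (L-24)))" by simp
  also have "\<dots> \<le> 20^12 * 20^12 * (2000 * (23/10)^(L-24))"
  proof (intro mult_mono)
    show "real (card (LL 12)) \<le> 20^12" using LL_card[of 12] by (simp add: of_nat_le_iff[symmetric])
    show "real (card (LL 12)) \<le> 20^12" using LL_card[of 12] by (simp add: of_nat_le_iff[symmetric])
    show "real (card (Pset (L-24))) \<le> 2000 * (23/10)^(L-24)" by (rule Pset_card)
  qed auto
  also have "\<dots> \<le> 20^24 * 2000 * (23/10)^L"
  proof -
    have "(23/10::real)^(L-24) \<le> (23/10)^L" by (rule power_increasing) auto
    thus ?thesis by (simp add: power_add[symmetric])
  qed
  finally show ?thesis .
qed


definition Sub :: "nat set \<Rightarrow> nat list set" where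
  "Sub S = {p \<in> allPerms. \<exists>k\<in>S. pattern_le p (osc (k+2))}"

definition wit :: "nat list \<Rightarrow> nat \<Rightarrow> nat list \<Rightarrow> bool" where
  "wit p m ps \<longleftrightarrow> m \<ge> 2 \<and> pos_setting m ps \<and> length ps = length p \<and> order_iso (map ((!) (osc m)) ps) p"

lemma wit_ex: assumes "p \<in> Sub S" shows "\<exists>m ps. wit p m ps"
proof -
  obtain k where "pattern_le p (osc (k+2))" using assms by (auto simp: Sub_def)
  then obtain ps where ps: "sorted_wrt (<) ps" "\<forall>x\<in>set ps. x < length (osc (k+2))" "length ps = length p"
    "order_iso (map ((!) (osc (k+2))) ps) p" by (rule embed)
  have "pos_setting (k+2) ps" using ps by unfold_locales auto
  thus ?thesis using ps unfolding wit_def by (intro exI[of _ "k+2"] exI[of _ ps]) auto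
qed

lemma wit_inv:
  assumes "wit p m ps" "s < t" "t < length ps"
  shows "((map ((!) (osc m)) ps)!s > (map ((!) (osc m)) ps)!t) \<longleftrightarrow> E (map (rh m) ps) s t"
proof -
  interpret pos_setting m ps using assms(1) by (simp add: wit_def)
  have "ps!s < ps!t" using lt assms by simp
  moreover have "ps!t < 2*m+4" using ps_bnd assms by simp
  ultimately have "(av m (ps!s) > av m (ps!t)) = (\<bar>rh m (ps!s) - rh m (ps!t)\<bar> = 1)" by (rule av_inv[OF m2])
  moreover have "ps!s < 2*m+4" using ps_bnd assms by simp
  ultimately show ?thesis using assms \<open>ps!t < 2*m+4\<close> by (simp add: E_def abs_minus_commute)
qed

lemma wit_distinct:
  assumes "wit p m ps" shows "distinct (map ((!) (osc m)) ps)"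
proof -
  interpret pos_setting m ps using assms by (simp add: wit_def)
  have dps: "distinct ps" using srt by (simp add: strict_sorted_iff)
  have do: "distinct (osc m)" using osc_perm[OF m2] by (simp add: perms_def)
  have "inj_on ((!) (osc m)) (set ps)"
  proof (rule inj_onI)
    fix x y assume "x \<in> set ps" "y \<in> set ps" "osc m ! x = osc m ! y"
    thus "x = y" using bnd do nth_eq_iff_index_eq by (metis osc_len)
  qed
  thus ?thesis using dps by (simp add: distinct_map)
qed

definition gcode :: "nat list \<Rightarrow> int option list" where
  "gcode p = (SOME c. \<exists>m ps. wit p m ps \<and> c = code (map (rh m) ps))"

lemma gcode_wit: assumes "p \<in> Sub S" obtains m ps where "wit p m ps" "gcode p = code (map (rh m) ps)"
proof -
  have "\<exists>c m ps. wit p m ps \<and> c = code (map (rh m) ps)" using wit_ex[OF assms] by blast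
  hence "\<exists>m ps. wit p m ps \<and> gcode p = code (map (rh m) ps)" unfolding gcode_def by (rule someI_ex)
  thus ?thesis using that by blast
qed

lemma gcode_in:
  assumes "p \<in> Sub S" "length p = n" "n \<ge> 1"
  shows "gcode p \<in> Codes (n-1)"
proof -
  obtain m ps where w: "wit p m ps" and g: "gcode p = code (map (rh m) ps)" using gcode_wit[OF assms(1)] by blast
  interpret pos_setting m ps using w by (simp add: wit_def)
  have wd: "w = map (rh m) ps" by (simp add: w_def)
  have ln: "length ps = n" using w assms by (simp add: wit_def)
  have "length (gcode p) = n - 1" using g ln by (simp add: code_len)
  moreover have "set (gcode p) \<subseteq> Afull"
  proof
    fix x assume "x \<in> set (gcode p)"
    hence "x = None \<or> (\<exists>d. x = Some d \<and> -5 \<le> d \<and> d \<le> 13)" using letters g wd by simp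
    thus "x \<in> Afull" by (auto simp: Afull_def)
  qed
  moreover have "Q (gcode p!(r-1)) (gcode p!r) (gcode p!(Suc r))" if "12 \<le> r" "r + 12 \<le> n - 1" for r
  proof -
    interpret zone m ps r using that ln by unfold_locales auto
    show ?thesis using zone_Q g wd by simp
  qed
  ultimately show ?thesis unfolding Codes_def by auto
qed

lemma gcode_inj:
  assumes "p \<in> Sub S" "p' \<in> Sub S" "p \<in> perms n" "p' \<in> perms n" "gcode p = gcode p'"
  shows "p = p'"
proof -
  obtain m ps where w: "wit p m ps" and g: "gcode p = code (map (rh m) ps)" using gcode_wit[OF assms(1)] by blast
  obtain m' ps' where w': "wit p' m' ps'" and g': "gcode p' = code (map (rh m') ps')" using gcode_wit[OF assms(2)] by blast
  have lp: "length p = n" "length p' = n" using assms(3,4) perms_len by auto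
  have ln: "length ps = n" "length ps' = n" using w w' lp by (auto simp: wit_def)
  have ce: "code (map (rh m) ps) = code (map (rh m') ps')" using g g' assms(5) by simp
  have oi: "order_iso (map ((!) (osc m)) ps) (map ((!) (osc m')) ps')"
  proof (rule order_iso_from_inv)
    show "distinct (map ((!) (osc m)) ps)" by (rule wit_distinct[OF w])
    show "distinct (map ((!) (osc m')) ps')" by (rule wit_distinct[OF w'])
    show "length (map ((!) (osc m)) ps) = length (map ((!) (osc m')) ps')" using ln by simp
    fix s t assume st: "s < t" "t < length (map ((!) (osc m)) ps)"
    have "E (map (rh m) ps) s t = E (map (rh m') ps') s t"
      by (rule code_eq_edge) (use ln ce st in auto)
    thus "(map ((!) (osc m)) ps ! t < map ((!) (osc m)) ps ! s) =
          (map ((!) (osc m')) ps' ! t < map ((!) (osc m')) ps' ! s)"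
      using wit_inv[OF w, of s t] wit_inv[OF w', of s t] st ln by simp
  qed
  have "order_iso p (map ((!) (osc m)) ps)" using w by (simp add: wit_def order_iso_sym)
  hence "order_iso p (map ((!) (osc m')) ps')" using oi order_iso_trans by blast
  hence "order_iso p p'" using w' order_iso_trans unfolding wit_def by blast
  thus ?thesis using order_iso_perms_eq assms(3,4) by blast
qed

lemma perms_fin: "finite (perms n)"
proof -
  have "perms n \<subseteq> {xs. set xs \<subseteq> {1..n} \<and> length xs = n}" using perms_len by (auto simp: perms_def)
  thus ?thesis using finite_lists_length_eq[of "{1..n}" n] finite_subset by blast
qed

lemma Sub_card: assumes "n \<ge> 1" shows "real (card (Sub S \<inter> perms n)) \<le> 20^24 * 2000 * (23/10)^n"
proof -
  have "card (Sub S \<inter> perms n) \<le> card (Codes (n-1))"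
  proof (rule card_inj_on_le[OF _ _ Codes_fin])
    show "inj_on gcode (Sub S \<inter> perms n)" using gcode_inj by (auto intro!: inj_onI)
    show "gcode ` (Sub S \<inter> perms n) \<subseteq> Codes (n-1)" using gcode_in assms perms_len by auto
  qed
  hence "real (card (Sub S \<inter> perms n)) \<le> real (card (Codes (n-1)))" by simp
  also have "\<dots> \<le> 20^24 * 2000 * (23/10)^(n-1)" by (rule Codes_card)
  also have "\<dots> \<le> 20^24 * 2000 * (23/10)^n" by (intro mult_left_mono power_increasing) auto
  finally show ?thesis .
qed

lemma Sub_closed: "closed_class (Sub S)"
  unfolding closed_class_def Sub_def using pattern_le_trans by blast

lemma osc_allPerms: "osc (k+2) \<in> allPerms" using osc_perm[of "k+2"] by (auto simp: allPerms_def)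

lemma Sub_inj: "inj Sub"
proof (rule injI)
  fix S T assume eq: "Sub S = Sub T"
  show "S = T"
  proof (rule ccontr)
    have key: False if "k \<in> S" "k \<notin> T" "Sub S = Sub T" for S T k
    proof -
      have "osc (k+2) \<in> Sub S" unfolding Sub_def using that(1) osc_allPerms pattern_le_refl by blast
      hence "osc (k+2) \<in> Sub T" using that by simp
      then obtain j where j: "j \<in> T" "pattern_le (osc (k+2)) (osc (j+2))" by (auto simp: Sub_def)
      have "j \<noteq> k" using j that by auto
      show False
      proof (cases "j < k")
        case True thus False using pattern_le_len[OF j(2)] by simp
      next
        case False
        hence "k + 2 < j + 2" using \<open>j \<noteq> k\<close> by simp
        thus False using antichain[of "k+2" "j+2"] j by simp
      qed
    qed
    assume "S \<noteq> T"
    then obtain k where "k \<in> S \<and> k \<notin> T \<or> k \<in> T \<and> k \<notin> S" by blast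
    thus False using key eq by metis
  qed
qed

theorem mainTheorem11:
  fixes \<epsilon> :: real
  assumes "\<epsilon> > 0"
  shows "uncountable (K (root_const + \<epsilon>))"
proof -
  define \<gamma> where "\<gamma> = root_const + \<epsilon>"
  define C :: real where "C = 20^24 * 2000"
  have g: "\<gamma> > 23/10" using root_ge assms unfolding \<gamma>_def by linarith
  have r1: "\<gamma> / (23/10) > 1" using g by simp
  obtain N where N: "C < (\<gamma> / (23/10))^N" using real_arch_pow[OF r1] by blast
  have bound: "real (card (Sub S \<inter> perms n)) < \<gamma>^n" if "n > N" for S n
  proof -
    have "C \<le> C" by simp
    have "(\<gamma> / (23/10))^N \<le> (\<gamma> / (23/10))^n" using r1 that by (intro power_increasing) auto
    hence "C < (\<gamma> / (23/10))^n" using N by linarith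
    hence "C * (23/10)^n < (\<gamma> / (23/10))^n * (23/10)^n" by (intro mult_strict_right_mono) auto
    also have "\<dots> = \<gamma>^n" by (simp add: power_divide)
    finally have "C * (23/10)^n < \<gamma>^n" .
    moreover have "real (card (Sub S \<inter> perms n)) \<le> C * (23/10)^n" using Sub_card[of n S] that unfolding C_def by simp
    ultimately show ?thesis by linarith
  qed
  have sub: "range Sub \<subseteq> K \<gamma>"
  proof
    fix X assume "X \<in> range Sub"
    then obtain S where S: "X = Sub S" by auto
    show "X \<in> K \<gamma>" unfolding K_def S using Sub_closed bound by blast
  qed
  have "uncountable (range Sub)"
  proof
    assume "countable (range Sub)"
    hence "countable (UNIV :: nat set set)" using countable_image_inj_on Sub_inj by blast
    thus False using uncountable_nat_sets by simp
  qed
  thus ?thesis using sub countable_subset unfolding \<gamma>_def by blast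
qed


end
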